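(* Let $G=(V,E)$ be a strongly biconnected directed graph and let $U_1,U_2$ be two distinct $2$-edge-biconnected blocks of $G$. Then $|U_1\cap U_2|\le 1$.
   Context: All graphs are finite. A directed graph $H$ is strongly biconnected if $H$ is strongly connected and its underlying undirected graph is biconnected. A strongly biconnected component of a directed graph $H=(W,F)$ is a maximal vertex subset $C\subseteq W$ such that the induced subgraph $H[C]$ is strongly biconnected. For a strongly biconnected directed graph $G=(V,E)$ and an edge $b\in E$, $G\setminus\{b\}=(V,E\setminus\{b\})$. For distinct $x,y\in V$, write $x \overset{e}{\leftrightsquigarrow} y$ if for every edge $b\in E$ there is a strongly biconnected component of $G\setminus\{b\}$ containing both $x$ and $y$. A $2$-edge-biconnected block of $G$ is a maximal vertex subset $U\subseteq V$ with $|U|>1$ such that $x \overset{e}{\leftrightsquigarrow} y$ for all distinct $x,y\in U$. *)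

theory Defs
  imports Main
begin

definition digraph :: "'a set \<Rightarrow> ('a \<times> 'a) set \<Rightarrow> bool" where
  "digraph V E \<longleftrightarrow> finite V \<and> E \<subseteq> V \<times> V"

definition strongly_connected :: "'a set \<Rightarrow> ('a \<times> 'a) set \<Rightarrow> bool" where
  "strongly_connected W F \<longleftrightarrow> W \<noteq> {} \<and>
     (\<forall>x\<in>W. \<forall>y\<in>W. (x, y) \<in> (F \<inter> (W \<times> W))\<^sup>*)"

definition und_connected :: "'a set \<Rightarrow> ('a \<times> 'a) set \<Rightarrow> bool" where
  "und_connected W F \<longleftrightarrow> W \<noteq> {} \<and>
     (\<forall>x\<in>W. \<forall>y\<in>W. (x, y) \<in> ((F \<inter> (W \<times> W)) \<union> (F \<inter> (W \<times> W))\<inverse>)\<^sup>*)"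

definition und_biconnected :: "'a set \<Rightarrow> ('a \<times> 'a) set \<Rightarrow> bool" where
  "und_biconnected W F \<longleftrightarrow> und_connected W F \<and>
     (\<forall>v\<in>W. W - {v} \<noteq> {} \<longrightarrow> und_connected (W - {v}) F)"

definition strongly_biconnected :: "'a set \<Rightarrow> ('a \<times> 'a) set \<Rightarrow> bool" where
  "strongly_biconnected W F \<longleftrightarrow> strongly_connected W F \<and> und_biconnected W F"

definition sb_component :: "'a set \<Rightarrow> ('a \<times> 'a) set \<Rightarrow> 'a set \<Rightarrow> bool" where
  "sb_component W F C \<longleftrightarrow> C \<subseteq> W \<and> strongly_biconnected C F \<and>
     (\<forall>D. C \<subset> D \<and> D \<subseteq> W \<longrightarrow> \<not> strongly_biconnected D F)"

definition e_rel :: "'a set \<Rightarrow> ('a \<times> 'a) set \<Rightarrow> 'a \<Rightarrow> 'a \<Rightarrow> bool" where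
  "e_rel V E x y \<longleftrightarrow> (\<forall>b\<in>E. \<exists>C. sb_component V (E - {b}) C \<and> x \<in> C \<and> y \<in> C)"

definition e_rel_set :: "'a set \<Rightarrow> ('a \<times> 'a) set \<Rightarrow> 'a set \<Rightarrow> bool" where
  "e_rel_set V E U \<longleftrightarrow> U \<subseteq> V \<and> 1 < card U \<and>
     (\<forall>x\<in>U. \<forall>y\<in>U. x \<noteq> y \<longrightarrow> e_rel V E x y)"

definition two_edge_biconnected_block :: "'a set \<Rightarrow> ('a \<times> 'a) set \<Rightarrow> 'a set \<Rightarrow> bool" where
  "two_edge_biconnected_block V E U \<longleftrightarrow> e_rel_set V E U \<and>
     (\<forall>U'. U \<subset> U' \<and> e_rel_set V E U' \<longrightarrow> False)"

end

theory Submission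
  imports Defs
begin

lemma lift_rt:
  assumes "W \<subseteq> W'" "(x,y) \<in> (F \<inter> W \<times> W)\<^sup>*"
  shows "(x,y) \<in> (F \<inter> W' \<times> W')\<^sup>*"
proof -
  have "F \<inter> W \<times> W \<subseteq> F \<inter> W' \<times> W'" using assms(1) by blast
  from rtrancl_mono[OF this] assms(2) show ?thesis by blast
qed

lemma lift_ru:
  assumes "W \<subseteq> W'" "(x,y) \<in> ((F \<inter> W \<times> W) \<union> (F \<inter> W \<times> W)\<inverse>)\<^sup>*"
  shows "(x,y) \<in> ((F \<inter> W' \<times> W') \<union> (F \<inter> W' \<times> W')\<inverse>)\<^sup>*"
proof -
  have "(F \<inter> W \<times> W) \<union> (F \<inter> W \<times> W)\<inverse> \<subseteq> (F \<inter> W' \<times> W') \<union> (F \<inter> W' \<times> W')\<inverse>"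
    using assms(1) by blast
  from rtrancl_mono[OF this] assms(2) show ?thesis by blast
qed

lemma sc_union:
  assumes "strongly_connected A F" "strongly_connected B F" "a \<in> A" "a \<in> B"
  shows "strongly_connected (A \<union> B) F"
  unfolding strongly_connected_def
proof (intro conjI ballI)
  show "A \<union> B \<noteq> {}" using assms by blast
  fix x y assume x: "x \<in> A \<union> B" and y: "y \<in> A \<union> B"
  have 1: "(x,a) \<in> (F \<inter> (A\<union>B) \<times> (A\<union>B))\<^sup>*"
    using x assms lift_rt[of A "A\<union>B" x a F] lift_rt[of B "A\<union>B" x a F]
    unfolding strongly_connected_def by blast
  have 2: "(a,y) \<in> (F \<inter> (A\<union>B) \<times> (A\<union>B))\<^sup>*"
    using y assms lift_rt[of A "A\<union>B" a y F] lift_rt[of B "A\<union>B" a y F]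
    unfolding strongly_connected_def by blast
  show "(x,y) \<in> (F \<inter> (A\<union>B) \<times> (A\<union>B))\<^sup>*" using 1 2 by simp
qed

lemma uc_union:
  assumes "und_connected A F" "und_connected B F" "a \<in> A" "a \<in> B"
  shows "und_connected (A \<union> B) F"
  unfolding und_connected_def
proof (intro conjI ballI)
  show "A \<union> B \<noteq> {}" using assms by blast
  fix x y assume x: "x \<in> A \<union> B" and y: "y \<in> A \<union> B"
  have 1: "(x,a) \<in> ((F \<inter> (A\<union>B) \<times> (A\<union>B)) \<union> (F \<inter> (A\<union>B) \<times> (A\<union>B))\<inverse>)\<^sup>*"
    using x assms lift_ru[of A "A\<union>B" x a F] lift_ru[of B "A\<union>B" x a F]
    unfolding und_connected_def by blast
  have 2: "(a,y) \<in> ((F \<inter> (A\<union>B) \<times> (A\<union>B)) \<union> (F \<inter> (A\<union>B) \<times> (A\<union>B))\<inverse>)\<^sup>*"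
    using y assms lift_ru[of A "A\<union>B" a y F] lift_ru[of B "A\<union>B" a y F]
    unfolding und_connected_def by blast
  show "(x,y) \<in> ((F \<inter> (A\<union>B) \<times> (A\<union>B)) \<union> (F \<inter> (A\<union>B) \<times> (A\<union>B))\<inverse>)\<^sup>*"
    using 1 2 by simp
qed

lemma uc_minus:
  assumes "und_biconnected C F" "c \<in> C" "c \<noteq> v"
  shows "und_connected (C - {v}) F"
proof (cases "v \<in> C")
  case True
  then show ?thesis using assms unfolding und_biconnected_def by blast
next
  case False
  then have "C - {v} = C" by blast
  then show ?thesis using assms unfolding und_biconnected_def by simp
qed

lemma sb_union2:
  assumes "strongly_biconnected C F" "strongly_biconnected D F"
    "a \<in> C" "a \<in> D" "a' \<in> C" "a' \<in> D" "a \<noteq> a'"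
  shows "strongly_biconnected (C \<union> D) F"
  unfolding strongly_biconnected_def und_biconnected_def
proof (intro conjI ballI impI)
  have bc: "und_biconnected C F" "und_biconnected D F"
    using assms(1,2) unfolding strongly_biconnected_def by auto
  show "strongly_connected (C \<union> D) F"
    by (rule sc_union[of C F D a]) (use assms in \<open>auto simp: strongly_biconnected_def\<close>)
  show "und_connected (C \<union> D) F"
    by (rule uc_union[of C F D a]) (use bc assms in \<open>auto simp: und_biconnected_def\<close>)
  fix v assume "v \<in> C \<union> D"
  have e: "C \<union> D - {v} = (C - {v}) \<union> (D - {v})" by blast
  show "und_connected (C \<union> D - {v}) F"
  proof (cases "v = a")
    case True
    then have ne: "a' \<noteq> v" using assms(7) by simp
    have "und_connected ((C - {v}) \<union> (D - {v})) F"
      by (rule uc_union[OF uc_minus[OF bc(1) assms(5) ne] uc_minus[OF bc(2) assms(6) ne], of a'])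
         (use assms ne in auto)
    then show ?thesis using e by simp
  next
    case False
    then have ne: "a \<noteq> v" by simp
    have "und_connected ((C - {v}) \<union> (D - {v})) F"
      by (rule uc_union[OF uc_minus[OF bc(1) assms(3) ne] uc_minus[OF bc(2) assms(4) ne], of a])
         (use assms ne in auto)
    then show ?thesis using e by simp
  qed
qed

lemma sb_union3:
  assumes "strongly_biconnected C1 F" "strongly_biconnected C2 F" "strongly_biconnected C3 F"
    "z \<in> C1" "z \<in> C2" "w \<in> C2" "w \<in> C3" "x \<in> C1" "x \<in> C3"
    "x \<noteq> z" "x \<noteq> w" "z \<noteq> w"
  shows "strongly_biconnected (C1 \<union> C2 \<union> C3) F"
  unfolding strongly_biconnected_def und_biconnected_def
proof (intro conjI ballI impI)
  have bc: "und_biconnected C1 F" "und_biconnected C2 F" "und_biconnected C3 F"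
    and sc: "strongly_connected C1 F" "strongly_connected C2 F" "strongly_connected C3 F"
    using assms(1,2,3) unfolding strongly_biconnected_def by auto
  have uc: "und_connected C1 F" "und_connected C2 F" "und_connected C3 F"
    using bc unfolding und_biconnected_def by auto
  have s: "strongly_connected (C1 \<union> C2) F"
    by (rule sc_union[OF sc(1) sc(2), of z]) (use assms in auto)
  show "strongly_connected (C1 \<union> C2 \<union> C3) F"
    by (rule sc_union[OF s sc(3), of w]) (use assms in auto)
  have u: "und_connected (C1 \<union> C2) F"
    by (rule uc_union[OF uc(1) uc(2), of z]) (use assms in auto)
  show "und_connected (C1 \<union> C2 \<union> C3) F"
    by (rule uc_union[OF u uc(3), of w]) (use assms in auto)
  fix v assume "v \<in> C1 \<union> C2 \<union> C3"
  have e: "C1 \<union> C2 \<union> C3 - {v} = (C1 - {v}) \<union> (C2 - {v}) \<union> (C3 - {v})" by blast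
  have m1: "und_connected (C1 - {v}) F" "und_connected (C2 - {v}) F" "und_connected (C3 - {v}) F"
  proof -
    obtain c1 where c1: "c1 \<in> C1" "c1 \<noteq> v" using assms(4,8,10) by metis
    obtain c2 where c2: "c2 \<in> C2" "c2 \<noteq> v" using assms(5,6,12) by metis
    obtain c3 where c3: "c3 \<in> C3" "c3 \<noteq> v" using assms(7,9,11) by metis
    show "und_connected (C1 - {v}) F" "und_connected (C2 - {v}) F" "und_connected (C3 - {v}) F"
      using uc_minus[OF bc(1) c1] uc_minus[OF bc(2) c2] uc_minus[OF bc(3) c3] by auto
  qed
  show "und_connected (C1 \<union> C2 \<union> C3 - {v}) F"
  proof (cases "v = x")
    case True
    have a: "und_connected ((C1 - {v}) \<union> (C2 - {v})) F"
      by (rule uc_union[OF m1(1) m1(2), of z]) (use assms True in auto)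
    have "und_connected ((C1 - {v}) \<union> (C2 - {v}) \<union> (C3 - {v})) F"
      by (rule uc_union[OF a m1(3), of w]) (use assms True in auto)
    then show ?thesis using e by simp
  next
    case False
    show ?thesis
    proof (cases "v = z")
      case True
      have a: "und_connected ((C2 - {v}) \<union> (C3 - {v})) F"
        by (rule uc_union[OF m1(2) m1(3), of w]) (use assms True in auto)
      have "und_connected ((C2 - {v}) \<union> (C3 - {v}) \<union> (C1 - {v})) F"
        by (rule uc_union[OF a m1(1), of x]) (use assms True False in auto)
      moreover have "(C2 - {v}) \<union> (C3 - {v}) \<union> (C1 - {v}) = C1 \<union> C2 \<union> C3 - {v}" by blast
      ultimately show ?thesis by simp
    next
      case False2: False
      have a: "und_connected ((C3 - {v}) \<union> (C1 - {v})) F"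
        by (rule uc_union[OF m1(3) m1(1), of x]) (use assms False in auto)
      have "und_connected ((C3 - {v}) \<union> (C1 - {v}) \<union> (C2 - {v})) F"
        by (rule uc_union[OF a m1(2), of z]) (use assms False2 in auto)
      moreover have "(C3 - {v}) \<union> (C1 - {v}) \<union> (C2 - {v}) = C1 \<union> C2 \<union> C3 - {v}" by blast
      ultimately show ?thesis by simp
    qed
  qed
qed

lemma comp_absorb:
  assumes "sb_component W F C" "D \<subseteq> W" "C \<subseteq> D" "strongly_biconnected D F"
  shows "C = D"
  using assms unfolding sb_component_def by blast

lemma three:
  assumes "e_rel_set V E U" "x \<in> U" "z \<in> U" "w \<in> U" "z \<noteq> w" "b \<in> E"
  shows "\<exists>C. sb_component V (E - {b}) C \<and> x \<in> C \<and> z \<in> C \<and> w \<in> C"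
proof -
  have rel: "\<exists>C. sb_component V (E - {b}) C \<and> p \<in> C \<and> q \<in> C"
    if "p \<in> U" "q \<in> U" "p \<noteq> q" for p q
  proof -
    have "e_rel V E p q" using assms(1) that unfolding e_rel_set_def by auto
    then show ?thesis using assms(6) unfolding e_rel_def by auto
  qed
  show ?thesis
  proof (cases "x = z \<or> x = w")
    case True
    obtain C where "sb_component V (E - {b}) C" "z \<in> C" "w \<in> C"
      using rel[OF assms(3,4,5)] by auto
    then show ?thesis using True by auto
  next
    case False
    obtain C1 where c1: "sb_component V (E - {b}) C1" "x \<in> C1" "z \<in> C1"
      using rel[OF assms(2,3)] False by auto
    obtain C2 where c2: "sb_component V (E - {b}) C2" "z \<in> C2" "w \<in> C2"
      using rel[OF assms(3,4,5)] by auto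
    obtain C3 where c3: "sb_component V (E - {b}) C3" "x \<in> C3" "w \<in> C3"
      using rel[OF assms(2,4)] False by auto
    have s: "strongly_biconnected C1 (E - {b})" "strongly_biconnected C2 (E - {b})"
      "strongly_biconnected C3 (E - {b})" "C1 \<subseteq> V" "C2 \<subseteq> V" "C3 \<subseteq> V"
      using c1(1) c2(1) c3(1) unfolding sb_component_def by auto
    have "strongly_biconnected (C1 \<union> C2 \<union> C3) (E - {b})"
      by (rule sb_union3[OF s(1,2,3), of z w x]) (use c1 c2 c3 False assms(5) in auto)
    moreover have "C1 \<union> C2 \<union> C3 \<subseteq> V" using s by auto
    ultimately have "C1 = C1 \<union> C2 \<union> C3" using comp_absorb[OF c1(1), of "C1 \<union> C2 \<union> C3"] by auto
    then show ?thesis using c1 c2 by auto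
  qed
qed

theorem mainTheorem2:
  assumes "digraph V E"
    and "strongly_biconnected V E"
    and "two_edge_biconnected_block V E U1"
    and "two_edge_biconnected_block V E U2"
    and "U1 \<noteq> U2"
  shows "card (U1 \<inter> U2) \<le> 1"
proof (rule ccontr)
  assume "\<not> card (U1 \<inter> U2) \<le> 1"
  have r1: "e_rel_set V E U1" and r2: "e_rel_set V E U2"
    using assms unfolding two_edge_biconnected_block_def by auto
  have fin: "finite V" using assms(1) unfolding digraph_def by simp
  have "finite (U1 \<inter> U2)" using r1 fin unfolding e_rel_set_def by (meson finite_Int rev_finite_subset)
  then obtain z w where zw: "z \<in> U1 \<inter> U2" "w \<in> U1 \<inter> U2" "z \<noteq> w"
    using \<open>\<not> card (U1 \<inter> U2) \<le> 1\<close> card_le_Suc0_iff_eq[of "U1 \<inter> U2"] by auto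
  have cross: "e_rel V E x y" if x: "x \<in> U1" and y: "y \<in> U2" for x y
    unfolding e_rel_def
  proof
    fix b assume b: "b \<in> E"
    obtain K1 where k1: "sb_component V (E - {b}) K1" "x \<in> K1" "z \<in> K1" "w \<in> K1"
      using three[OF r1 x _ _ zw(3) b] zw by blast
    obtain K2 where k2: "sb_component V (E - {b}) K2" "y \<in> K2" "z \<in> K2" "w \<in> K2"
      using three[OF r2 y _ _ zw(3) b] zw by blast
    have "strongly_biconnected K1 (E - {b})" "strongly_biconnected K2 (E - {b})"
      using k1(1) k2(1) unfolding sb_component_def by auto
    then have "strongly_biconnected (K1 \<union> K2) (E - {b})"
      by (rule sb_union2[of K1 _ K2 z w]) (use k1 k2 zw in auto)
    moreover have "K1 \<union> K2 \<subseteq> V" using k1(1) k2(1) unfolding sb_component_def by auto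
    ultimately have "K1 = K1 \<union> K2" using comp_absorb[OF k1(1), of "K1 \<union> K2"] by auto
    then show "\<exists>C. sb_component V (E - {b}) C \<and> x \<in> C \<and> y \<in> C"
      using k1 k2 by blast
  qed
  have un: "e_rel_set V E (U1 \<union> U2)"
    unfolding e_rel_set_def
  proof (intro conjI ballI impI)
    show "U1 \<union> U2 \<subseteq> V" using r1 r2 unfolding e_rel_set_def by blast
    then have "finite (U1 \<union> U2)" using fin rev_finite_subset by blast
    moreover have "1 < card U1" using r1 unfolding e_rel_set_def by blast
    ultimately show "1 < card (U1 \<union> U2)"
      by (meson card_mono order_less_le_trans sup_ge1)
    fix x y assume "x \<in> U1 \<union> U2" "y \<in> U1 \<union> U2" "x \<noteq> y"
    then show "e_rel V E x y"
    proof (elim UnE)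
      assume "x \<in> U1" "y \<in> U1" then show ?thesis using r1 \<open>x \<noteq> y\<close> unfolding e_rel_set_def by blast
    next
      assume "x \<in> U2" "y \<in> U2" then show ?thesis using r2 \<open>x \<noteq> y\<close> unfolding e_rel_set_def by blast
    next
      assume "x \<in> U1" "y \<in> U2" then show ?thesis using cross by blast
    next
      assume "x \<in> U2" "y \<in> U1"
      then have "e_rel V E y x" using cross by blast
      thus ?thesis unfolding e_rel_def by blast
    qed
  qed
  show False
  proof (cases "U2 \<subseteq> U1")
    case True
    then have "U2 \<subset> U1" using assms(5) by blast
    then show False using assms(4) r1 unfolding two_edge_biconnected_block_def by blast
  next
    case False
    then have "U1 \<subset> U1 \<union> U2" by blast
    then show False using assms(3) un unfolding two_edge_biconnected_block_def by blast
  qed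
qed

end
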